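(* Under the setting and assumptions (A1)–(A5) described in the context, define for $t\ge 0$ \[ S(t)=\tilde S e^{(\beta/\gamma)\tilde R}\varphi^{-1}(t),\qquad E(t)=\tilde E e^{-\delta t}+\tilde S e^{(\beta/\gamma)\tilde R}e^{-\delta t}\int_{\varphi^{-1}(t)}^{e^{-(\beta/\gamma)\tilde R}}e^{\delta\varphi(v)}\,dv, \] \[ I(t)=N-\tilde S e^{(\beta/\gamma)\tilde R}\varphi^{-1}(t)+\frac{\gamma}{\beta}\log\varphi^{-1}(t)-\tilde E e^{-\delta t}-\tilde S e^{(\beta/\gamma)\tilde R}e^{-\delta t}\int_{\varphi^{-1}(t)}^{e^{-(\beta/\gamma)\tilde R}}e^{\delta\varphi(v)}\,dv, \qquad R(t)=-\frac{\gamma}{\beta}\log\varphi^{-1}(t). \] Then $(S(t),E(t),I(t),R(t))$ is a solution of the initial value problem $S'=-\beta SI$, $E'=\beta SI-\delta E$, $I'=\delta E-\gamma I$, $R'=\gamma I$ for $t>0$, with $S(0)=\tilde S$, $E(0)=\tilde E$, $I(0)=\tilde I$, $R(0)=\tilde R$.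
   Context: Let $\beta,\gamma,\delta>0$ be constants and $\tilde S,\tilde E,\tilde I,\tilde R$ real numbers with $N:=\tilde S+\tilde E+\tilde I+\tilde R>0$. The SEIR initial value problem is $S'(t)=-\beta S(t)I(t)$, $E'(t)=\beta S(t)I(t)-\delta E(t)$, $I'(t)=\delta E(t)-\gamma I(t)$, $R'(t)=\gamma I(t)$ for $t>0$, with $S(0)=\tilde S$, $E(0)=\tilde E$, $I(0)=\tilde I$, $R(0)=\tilde R$; a solution is a vector function $(S,E,I,R)$ of class $C^1(0,\infty)\cap C[0,\infty)$ satisfying these. Standing assumptions: (A1) $\tilde I>0$; (A2) $\tilde E>(\gamma/\delta)\tilde I$; (A3) $\tilde S>\delta\tilde E/(\beta\tilde I)$; (A4) $\tilde R\ge 0$ and $N>\tilde S e^{(\beta/\gamma)\tilde R}+\tilde R$. Let $\alpha$ be the unique solution in $(\tilde R,N)$ of $x=N-\tilde S e^{(\beta/\gamma)\tilde R}e^{-(\beta/\gamma)x}$, and assume (A5) $\tilde S<(\gamma/\beta)e^{(\beta/\gamma)(\alpha-\tilde R)}$. Put $u_0:=e^{-(\beta/\gamma)\tilde R}$, $u_\infty:=e^{-(\beta/\gamma)\alpha}$ (so $0<u_\infty<u_0$). Let $\psi$ be the unique function, continuous and positive on $(u_\infty,u_0]$ and $C^1$ on $(u_\infty,u_0)$, satisfying the Abel equation $\psi'(u)\psi(u)-\frac{\gamma+\delta}{u}\psi(u)=-\delta\,\frac{\beta N-\beta\tilde S e^{(\beta/\gamma)\tilde R}u+\gamma\log u}{u}$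 for $u\in(u_\infty,u_0)$ and $\psi(u_0)=\beta\tilde I$. Let $\varphi(u):=\int_u^{u_0}\frac{d\xi}{\xi\psi(\xi)}$ for $u\in(u_\infty,u_0]$; $\varphi$ is a strictly decreasing continuous bijection from $(u_\infty,u_0]$ onto $[0,\infty)$, of class $C^1$ on $(u_\infty,u_0)$, and $\varphi^{-1}:[0,\infty)\to(u_\infty,u_0]$ denotes its inverse. *)

theory Defs
  imports "HOL-Analysis.Analysis"
begin

definition seir_phi :: "(real \<Rightarrow> real) \<Rightarrow> real \<Rightarrow> real \<Rightarrow> real" where
  "seir_phi \<psi> u0 u = integral {u..u0} (\<lambda>\<xi>. 1 / (\<xi> * \<psi> \<xi>))"

definition seir_phi_inv :: "(real \<Rightarrow> real) \<Rightarrow> real \<Rightarrow> real \<Rightarrow> real \<Rightarrow> real" where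
  "seir_phi_inv \<psi> uinf u0 t = the_inv_into {uinf<..u0} (seir_phi \<psi> u0) t"

end

theory Submission
  imports Defs
begin

lemma cont_glue:
  fixes f :: "real \<Rightarrow> real"
  assumes "\<And>x. x \<in> S \<Longrightarrow> \<exists>a b. a < x \<and> x < b \<and> continuous_on (S \<inter> {a..b}) f"
  shows "continuous_on S f"
  unfolding continuous_on_eq_continuous_within
proof
  fix x assume x: "x \<in> S"
  then obtain a b where ab: "a < x" "x < b" "continuous_on (S \<inter> {a..b}) f" using assms by blast
  have xin: "x \<in> S \<inter> {a..b}" using ab x by simp
  have "continuous (at x within (S \<inter> {a..b})) f"
    using ab(3) xin continuous_on_eq_continuous_within by blast
  moreover have "at x within (S \<inter> {a..b}) = at x within S"
    by (rule at_within_nhd[where S="{a<..<b}"]) (use ab in auto)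
  ultimately show "continuous (at x within S) f" by simp
qed

lemma int_lower_deriv:
  fixes h :: "real \<Rightarrow> real"
  assumes "continuous_on {l<..b} h" "l < x" "x < b"
  shows "((\<lambda>y. integral {y..b} h) has_real_derivative (- h x)) (at x)"
proof -
  define a where "a = (l + x) / 2"
  have s: "{a..b} \<subseteq> {l<..b}" using assms(2) unfolding a_def by auto
  have c: "continuous_on {a..b} h" by (rule continuous_on_subset[OF assms(1) s])
  have "((\<lambda>y. integral {y..b} h) has_real_derivative (- h x)) (at x within {a..b})"
    apply (rule integral_has_real_derivative'[OF c])
    using assms unfolding a_def by auto
  moreover have "x \<in> interior {a..b}" using assms unfolding a_def by auto
  ultimately show ?thesis by (metis at_within_interior)
qed

lemma int_lower_cont:
  fixes h :: "real \<Rightarrow> real"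
  assumes "continuous_on {l<..b} h"
  shows "continuous_on {l<..b} (\<lambda>y. integral {y..b} h)"
proof (rule cont_glue)
  fix x assume x: "x \<in> {l<..b}"
  define a where "a = (l + x) / 2"
  have s: "{a..b} \<subseteq> {l<..b}" using x unfolding a_def by auto
  have c: "continuous_on {a..b} h" by (rule continuous_on_subset[OF assms(1) s])
  have "continuous_on {a..b} (\<lambda>y. integral {y..b} h)"
    by (rule indefinite_integral_continuous_1'[OF integrable_continuous_interval[OF c]])
  moreover have "{l<..b} \<inter> {a..b+1} = {a..b}" using x unfolding a_def by auto
  ultimately have "continuous_on ({l<..b} \<inter> {a..b+1}) (\<lambda>y. integral {y..b} h)" by simp
  moreover have "a < x" "x < b + 1" using x unfolding a_def by auto
  ultimately show "\<exists>c d. c < x \<and> x < d \<and> continuous_on ({l<..b} \<inter> {c..d}) (\<lambda>y. integral {y..b} h)"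
    by blast
qed


theorem theorem4:
  fixes \<beta> \<gamma> \<delta> St Et It Rt \<alpha> :: real and \<psi> :: "real \<Rightarrow> real"
    and N u0 uinf :: real and S E I R :: "real \<Rightarrow> real"
  defines "N \<equiv> St + Et + It + Rt"
  defines "u0 \<equiv> exp (-(\<beta>/\<gamma>) * Rt)"
  defines "uinf \<equiv> exp (-(\<beta>/\<gamma>) * \<alpha>)"
  defines "S \<equiv> (\<lambda>t. St * exp ((\<beta>/\<gamma>) * Rt) * seir_phi_inv \<psi> uinf u0 t)"
  defines "E \<equiv> (\<lambda>t. Et * exp (-\<delta> * t) + St * exp ((\<beta>/\<gamma>) * Rt) * exp (-\<delta> * t)
       * integral {seir_phi_inv \<psi> uinf u0 t..u0} (\<lambda>v. exp (\<delta> * seir_phi \<psi> u0 v)))"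
  defines "I \<equiv> (\<lambda>t. N - St * exp ((\<beta>/\<gamma>) * Rt) * seir_phi_inv \<psi> uinf u0 t
       + (\<gamma>/\<beta>) * ln (seir_phi_inv \<psi> uinf u0 t) - Et * exp (-\<delta> * t)
       - St * exp ((\<beta>/\<gamma>) * Rt) * exp (-\<delta> * t)
       * integral {seir_phi_inv \<psi> uinf u0 t..u0} (\<lambda>v. exp (\<delta> * seir_phi \<psi> u0 v)))"
  defines "R \<equiv> (\<lambda>t. -(\<gamma>/\<beta>) * ln (seir_phi_inv \<psi> uinf u0 t))"
  assumes pos: "\<beta> > 0" "\<gamma> > 0" "\<delta> > 0"
    and Npos: "N > 0"
    and A1: "It > 0"
    and A2: "Et > (\<gamma>/\<delta>) * It"
    and A3: "St > \<delta> * Et / (\<beta> * It)"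
    and A4: "Rt \<ge> 0" "N > St * exp ((\<beta>/\<gamma>) * Rt) + Rt"
    and alpha: "Rt < \<alpha>" "\<alpha> < N"
      "\<alpha> = N - St * exp ((\<beta>/\<gamma>) * Rt) * exp (-(\<beta>/\<gamma>) * \<alpha>)"
    and A5: "St < (\<gamma>/\<beta>) * exp ((\<beta>/\<gamma>) * (\<alpha> - Rt))"
    and psi_cont: "continuous_on {uinf<..u0} \<psi>"
    and psi_pos: "\<forall>u\<in>{uinf<..u0}. \<psi> u > 0"
    and psi_C1: "\<psi> C1_differentiable_on {uinf<..<u0}"
    and psi_ode: "\<forall>u\<in>{uinf<..<u0}. \<exists>d. (\<psi> has_real_derivative d) (at u) \<and>
        d * \<psi> u - ((\<gamma> + \<delta>) / u) * \<psi> u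
          = -\<delta> * ((\<beta> * N - \<beta> * St * exp ((\<beta>/\<gamma>) * Rt) * u + \<gamma> * ln u) / u)"
    and psi_init: "\<psi> u0 = \<beta> * It"
  shows "continuous_on {0..} S \<and> continuous_on {0..} E \<and> continuous_on {0..} I \<and> continuous_on {0..} R
    \<and> S C1_differentiable_on {0<..} \<and> E C1_differentiable_on {0<..}
    \<and> I C1_differentiable_on {0<..} \<and> R C1_differentiable_on {0<..}
    \<and> (\<forall>t>0. (S has_real_derivative (-\<beta> * S t * I t)) (at t)
        \<and> (E has_real_derivative (\<beta> * S t * I t - \<delta> * E t)) (at t)
        \<and> (I has_real_derivative (\<delta> * E t - \<gamma> * I t)) (at t)
        \<and> (R has_real_derivative (\<gamma> * I t)) (at t))
    \<and> S 0 = St \<and> E 0 = Et \<and> I 0 = It \<and> R 0 = Rt"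
proof -
  note psi_pos' = psi_pos[rule_format]
  have Etpos: "Et > 0"
  proof -
    have "(\<gamma>/\<delta>) * It > 0" using pos A1 by simp
    then show ?thesis using A2 by linarith
  qed
  have Stpos: "St > 0"
  proof -
    have "\<delta> * Et / (\<beta> * It) > 0" using pos A1 Etpos by simp
    then show ?thesis using A3 by linarith
  qed
  define K where "K = St * exp ((\<beta>/\<gamma>) * Rt)"
  have Kpos: "K > 0" using Stpos by (simp add: K_def)
  have uinfpos: "uinf > 0" by (simp add: uinf_def)
  have u0pos: "u0 > 0" by (simp add: u0_def)
  have uinf_u0: "uinf < u0"
  proof -
    have "\<beta>/\<gamma> > 0" using pos by simp
    then have "(\<beta>/\<gamma>) * Rt < (\<beta>/\<gamma>) * \<alpha>" by (rule mult_strict_left_mono[OF alpha(1)])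
    then show ?thesis unfolding uinf_def u0_def by simp
  qed
  have lnu0: "ln u0 = -(\<beta>/\<gamma>) * Rt" by (simp add: u0_def)
  have lnuinf: "ln uinf = -(\<beta>/\<gamma>) * \<alpha>" by (simp add: uinf_def)
  have Ku0: "K * u0 = St" by (simp add: K_def u0_def flip: exp_add)
  define F where "F = (\<lambda>u. \<beta> * N - \<beta> * St * exp ((\<beta>/\<gamma>) * Rt) * u + \<gamma> * ln u)"
  have F_K: "F u = \<beta> * N - \<beta> * K * u + \<gamma> * ln u" for u by (simp add: F_def K_def)
  have Fuinf: "F uinf = 0"
  proof -
    have h: "N = \<alpha> + K * uinf" using alpha(3) by (simp add: K_def uinf_def)
    show ?thesis using pos unfolding F_K lnuinf h by (simp add: algebra_simps)
  qed
  have Fu0: "F u0 = \<beta> * (Et + It)"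
  proof -
    have "\<gamma> * ln u0 = - \<beta> * Rt" using pos unfolding lnu0 by simp
    then show ?thesis unfolding F_K using Ku0 by (simp add: N_def algebra_simps)
  qed
  have Fcont: "continuous_on {uinf<..u0} F"
    unfolding F_def using uinfpos by (auto intro!: continuous_intros)
  have Fder: "(F has_real_derivative (- (\<beta> * K) + \<gamma> / x)) (at x)" if "x > 0" for x
    unfolding F_def K_def using that by (auto intro!: derivative_eq_intros simp: field_simps)
  have Fle: "F u \<le> \<gamma> * (u - uinf) / uinf" if "uinf \<le> u" for u
  proof -
    have up: "u > 0" using that uinfpos by linarith
    have "F u = F u - F uinf" using Fuinf by simp
    also have "\<dots> = - \<beta> * K * (u - uinf) + \<gamma> * ln (u / uinf)"
      unfolding F_K using up uinfpos by (simp add: ln_div algebra_simps)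
    also have "\<dots> \<le> \<gamma> * ln (u / uinf)"
      using pos Kpos that by (simp add: mult_nonneg_nonneg)
    also have "\<dots> \<le> \<gamma> * (u / uinf - 1)"
      using ln_le_minus_one[of "u / uinf"] up uinfpos pos by (intro mult_left_mono) auto
    also have "\<dots> = \<gamma> * (u - uinf) / uinf" using uinfpos by (simp add: field_simps)
    finally show ?thesis .
  qed
  define f where "f = (\<lambda>\<xi>::real. 1 / (\<xi> * \<psi> \<xi>))"
  define \<phi> where "\<phi> = seir_phi \<psi> u0"
  have phi_eq: "\<phi> u = integral {u..u0} f" for u by (simp add: \<phi>_def seir_phi_def f_def)
  have phi_fun: "\<phi> = (\<lambda>u. integral {u..u0} f)" using phi_eq by auto
  have fpos: "f x > 0" if "x \<in> {uinf<..u0}" for x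
    using psi_pos' that uinfpos by (auto simp: f_def)
  have fcont: "continuous_on {uinf<..u0} f"
    unfolding f_def using psi_pos' uinfpos
    by (intro continuous_intros psi_cont) (auto, smt (verit, best) greaterThanAtMost_iff mult_pos_pos)
  have phicont: "continuous_on {uinf<..u0} \<phi>" unfolding phi_fun by (rule int_lower_cont[OF fcont])
  have phider: "(\<phi> has_real_derivative (- f x)) (at x)" if "uinf < x" "x < u0" for x
    unfolding phi_fun by (rule int_lower_deriv[OF fcont that])
  have phiu0: "\<phi> u0 = 0" by (simp add: phi_eq)
  define dpsi where "dpsi = (\<lambda>u. (\<gamma> + \<delta>) / u - \<delta> * F u / (u * \<psi> u))"
  have psider: "(\<psi> has_real_derivative dpsi u) (at u)" if "uinf < u" "u < u0" for u
  proof -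
    have "u \<in> {uinf<..<u0}" using that by simp
    obtain d where d: "(\<psi> has_real_derivative d) (at u)"
      "d * \<psi> u - ((\<gamma> + \<delta>) / u) * \<psi> u = -\<delta> * (F u / u)"
      using psi_ode \<open>u \<in> {uinf<..<u0}\<close> unfolding F_def by blast
    have pp: "\<psi> u > 0" using psi_pos' that by auto
    have up: "u > 0" using that uinfpos by auto
    have "d = dpsi u" using d(2) pp up unfolding dpsi_def by (simp add: field_simps)
    then show ?thesis using d(1) by simp
  qed
  define h where "h = (\<lambda>v. exp (\<delta> * \<phi> v))"
  define Hf where "Hf = (\<lambda>u. integral {u..u0} h)"
  have hcont: "continuous_on {uinf<..u0} h" unfolding h_def by (intro continuous_intros phicont)
  have Hfcont: "continuous_on {uinf<..u0} Hf" unfolding Hf_def by (rule int_lower_cont[OF hcont])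
  have Hfder: "(Hf has_real_derivative (- h x)) (at x)" if "uinf < x" "x < u0" for x
    unfolding Hf_def by (rule int_lower_deriv[OF hcont that])
  have Hfu0: "Hf u0 = 0" by (simp add: Hf_def)
  have Hfnn: "Hf u \<ge> 0" if "u \<in> {uinf<..u0}" for u
  proof -
    have "continuous_on {u..u0} h" by (rule continuous_on_subset[OF hcont]) (use that in auto)
    then have "h integrable_on {u..u0}" by (rule integrable_continuous_interval)
    then show ?thesis unfolding Hf_def
      by (rule Henstock_Kurzweil_Integration.integral_nonneg) (simp add: h_def)
  qed
  define w where "w = (\<lambda>u. (F u - \<psi> u) * exp (\<delta> * \<phi> u) - \<beta> * (Et + K * Hf u))"
  have wcont: "continuous_on {uinf<..u0} w"
    unfolding w_def by (intro continuous_intros Fcont psi_cont phicont Hfcont)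
  have wder: "(w has_real_derivative 0) (at x)" if "uinf < x" "x < u0" for x
  proof -
    have xp: "x > 0" using that uinfpos by simp
    have pp: "\<psi> x > 0" using psi_pos' that by simp
    show ?thesis unfolding w_def
      apply (rule derivative_eq_intros Fder[OF xp] psider[OF that] phider[OF that] Hfder[OF that] refl)+
      using xp pp by (simp add: dpsi_def f_def h_def field_simps F_K)
  qed
  have wu0: "w u0 = 0" unfolding w_def using Fu0 phiu0 Hfu0 psi_init by (simp add: algebra_simps)
  have ident: "(F u - \<psi> u) * exp (\<delta> * \<phi> u) = \<beta> * (Et + K * Hf u)" if "u \<in> {uinf<..u0}" for u
  proof (cases "u = u0")
    case True then show ?thesis using wu0 by (simp add: w_def)
  next
    case False
    then have uu: "u < u0" using that by simp
    have "w u0 = w u"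
    proof (rule DERIV_isconst_end[OF uu])
      show "continuous_on {u..u0} w" by (rule continuous_on_subset[OF wcont]) (use that in auto)
      show "\<And>x. u < x \<Longrightarrow> x < u0 \<Longrightarrow> (w has_real_derivative 0) (at x)"
        using that by (intro wder) auto
    qed
    then show ?thesis using wu0 by (simp add: w_def)
  qed
  have psi_lt_F: "\<psi> u < F u" if "u \<in> {uinf<..u0}" for u
  proof -
    have "\<beta> * (Et + K * Hf u) > 0" using pos Etpos Kpos Hfnn[OF that] by (simp add: add_pos_nonneg)
    then have "(F u - \<psi> u) * exp (\<delta> * \<phi> u) > 0" using ident[OF that] by simp
    then show ?thesis by (simp add: zero_less_mult_iff)
  qed
  define c where "c = uinf / (\<gamma> * u0)"
  have cpos: "c > 0" using uinfpos u0pos pos by (simp add: c_def)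
  have f_ge: "f x \<ge> c / (x - uinf)" if "uinf < x" "x \<le> u0" for x
  proof -
    have xp: "x > 0" using that uinfpos by simp
    have pp: "\<psi> x > 0" using psi_pos' that by simp
    have "\<psi> x < \<gamma> * (x - uinf) / uinf" using psi_lt_F[of x] Fle[of x] that by simp
    then have "x * \<psi> x \<le> u0 * (\<gamma> * (x - uinf) / uinf)"
      using that xp pp pos uinfpos by (intro mult_mono) auto
    also have "\<dots> = (x - uinf) / c" using uinfpos u0pos pos by (simp add: c_def field_simps)
    finally have "x * \<psi> x \<le> (x - uinf) / c" .
    then show ?thesis unfolding f_def using xp pp that cpos
      by (simp add: field_simps)
  qed
  have phi_lb: "\<phi> u \<ge> c * (ln (u0 - uinf) - ln (u - uinf))" if "u \<in> {uinf<..u0}" for u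
  proof -
    define k where "k = (\<lambda>u. \<phi> u - c * (ln (u0 - uinf) - ln (u - uinf)))"
    have "k u \<ge> k u0"
    proof (rule DERIV_nonpos_imp_decreasing_open[of u u0 k])
      show "u \<le> u0" using that by simp
      show "continuous_on {u..u0} k" unfolding k_def using that
        by (intro continuous_intros continuous_on_subset[OF phicont]) auto
      fix x assume x: "u < x" "x < u0"
      then have x': "uinf < x" "x < u0" using that by auto
      have "(k has_real_derivative (- f x + c / (x - uinf))) (at x)" unfolding k_def
        using x' by (auto intro!: derivative_eq_intros phider[OF x'] simp: field_simps)
      moreover have "- f x + c / (x - uinf) \<le> 0" using f_ge[of x] x' by simp
      ultimately show "\<exists>y. (k has_real_derivative y) (at x) \<and> y \<le> 0" by blast
    qed
    then show ?thesis unfolding k_def using phiu0 by simp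
  qed
  have unbdd: "\<exists>a. uinf < a \<and> a < u0 \<and> \<phi> a \<ge> M" for M
  proof -
    define M' where "M' = max M 1"
    have M'p: "M' > 0" by (simp add: M'_def)
    define a where "a = uinf + (u0 - uinf) * exp (- M' / c)"
    have e1: "exp (- M' / c) < 1" using M'p cpos by simp
    have d0: "u0 - uinf > 0" using uinf_u0 by simp
    have a1: "uinf < a" unfolding a_def using d0 by simp
    have "(u0 - uinf) * exp (- M' / c) < (u0 - uinf) * 1" using e1 d0 by (intro mult_strict_left_mono) auto
    then have a2: "a < u0" unfolding a_def by simp
    have "ln (a - uinf) = ln (u0 - uinf) - M' / c" unfolding a_def using d0 by (simp add: ln_mult)
    then have "c * (ln (u0 - uinf) - ln (a - uinf)) = M'" using cpos by simp
    then have "\<phi> a \<ge> M'" using phi_lb[of a] a1 a2 by simp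
    then have "\<phi> a \<ge> M" unfolding M'_def by simp
    then show ?thesis using a1 a2 by blast
  qed
  have phi_dec: "\<phi> u > \<phi> v" if "uinf < u" "u < v" "v \<le> u0" for u v
  proof (rule DERIV_neg_imp_decreasing_open[of u v \<phi>])
    show "u < v" by fact
    show "continuous_on {u..v} \<phi>" by (rule continuous_on_subset[OF phicont]) (use that in auto)
    fix x assume "u < x" "x < v"
    then have x': "uinf < x" "x < u0" using that by auto
    have "- f x < 0" using fpos[of x] x' by simp
    then show "\<exists>y. (\<phi> has_real_derivative y) (at x) \<and> y < 0" using phider[OF x'] by blast
  qed
  have phi_inj: "inj_on \<phi> {uinf<..u0}"
  proof (rule inj_onI)
    fix x y assume "x \<in> {uinf<..u0}" "y \<in> {uinf<..u0}" "\<phi> x = \<phi> y"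
    then show "x = y" using phi_dec[of x y] phi_dec[of y x] by (cases x y rule: linorder_cases) auto
  qed
  have phi_img: "{0..\<phi> a} \<subseteq> \<phi> ` {a..u0}" if a1: "uinf < a" and a2: "a \<le> u0" for a
  proof
    fix s assume s: "s \<in> {0..\<phi> a}"
    have cc: "continuous_on {a..u0} \<phi>" by (rule continuous_on_subset[OF phicont]) (use a1 in auto)
    have "\<exists>x\<ge>a. x \<le> u0 \<and> \<phi> x = s" using IVT2'[of \<phi> u0 s a] s phiu0 a2 cc by auto
    then obtain x where "a \<le> x" "x \<le> u0" "\<phi> x = s" by blast
    then show "s \<in> \<phi> ` {a..u0}" by auto
  qed
  define U where "U = seir_phi_inv \<psi> uinf u0"
  have U_eq: "U t = the_inv_into {uinf<..u0} \<phi> t" for t by (simp add: U_def seir_phi_inv_def \<phi>_def)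
  have U_phi: "U (\<phi> x) = x" if "x \<in> {uinf<..u0}" for x
    unfolding U_eq using the_inv_into_f_f[OF phi_inj that] .
  have Uprop: "U t \<in> {uinf<..u0} \<and> \<phi> (U t) = t" if "t \<ge> 0" for t
  proof -
    obtain a where a: "uinf < a" "a < u0" "\<phi> a \<ge> t" using unbdd by blast
    have "t \<in> \<phi> ` {a..u0}" using phi_img[of a] a that by auto
    then have "t \<in> \<phi> ` {uinf<..u0}" using a by auto
    then show ?thesis unfolding U_eq
      using the_inv_into_into[OF phi_inj _ order_refl] f_the_inv_into_f[OF phi_inj] by blast
  qed
  have U0: "U 0 = u0" using U_phi[of u0] phiu0 uinf_u0 by simp
  have Ult: "U t < u0" if "t > 0" for t
  proof -
    have "U t \<noteq> u0" using Uprop[of t] that phiu0 by auto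
    then show ?thesis using Uprop[of t] that by auto
  qed
  have Ucont: "continuous_on {0..} U"
  proof (rule cont_glue)
    fix t :: real assume t: "t \<in> {0..}"
    obtain a where a: "uinf < a" "a < u0" "\<phi> a \<ge> t + 1" using unbdd by blast
    have "continuous_on (\<phi> ` {a..u0}) U"
    proof (rule continuous_on_inv)
      show "continuous_on {a..u0} \<phi>" by (rule continuous_on_subset[OF phicont]) (use a in auto)
      show "compact {a..u0}" by simp
      show "\<forall>x\<in>{a..u0}. U (\<phi> x) = x" using U_phi a by auto
    qed
    moreover have "{0..} \<inter> {t - 1..t + 1} \<subseteq> \<phi> ` {a..u0}" using phi_img[of a] a by auto
    ultimately have "continuous_on ({0..} \<inter> {t - 1..t + 1}) U" by (rule continuous_on_subset)
    then show "\<exists>a b. a < t \<and> t < b \<and> continuous_on ({0..} \<inter> {a..b}) U"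
      by (intro exI[of _ "t - 1"] exI[of _ "t + 1"]) auto
  qed
  have Uder: "(U has_real_derivative (- (U t * \<psi> (U t)))) (at t)" if "t > 0" for t
  proof -
    have Ut: "uinf < U t" "U t < u0" using Uprop[of t] Ult[of t] that by auto
    have pp: "\<psi> (U t) > 0" using psi_pos' Ut by simp
    have up: "U t > 0" using Ut uinfpos by simp
    have "(U has_real_derivative inverse (- f (U t))) (at t)"
    proof (rule DERIV_inverse_function[where a=0 and b="t+1"])
      show "(\<phi> has_real_derivative - f (U t)) (at (U t))" by (rule phider[OF Ut])
      show "- f (U t) \<noteq> 0" using fpos[of "U t"] Ut by simp
      show "0 < t" "t < t + 1" using that by auto
      show "\<And>y. 0 < y \<Longrightarrow> y < t + 1 \<Longrightarrow> \<phi> (U y) = y" using Uprop by simp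
      show "isCont U t" using continuous_on_interior[OF Ucont, of t] that by simp
    qed
    moreover have "inverse (- f (U t)) = - (U t * \<psi> (U t))" unfolding f_def using pp up by simp
    ultimately show ?thesis by simp
  qed
  define Ip where "Ip = (\<lambda>t. \<psi> (U t) / \<beta>)"
  have S_fun: "S = (\<lambda>t. K * U t)" by (simp add: S_def K_def U_def)
  have R_fun: "R = (\<lambda>t. -(\<gamma>/\<beta>) * ln (U t))" by (simp add: R_def U_def)
  have E_alt: "E t = exp (-\<delta> * t) * (Et + K * Hf (U t))" for t
    by (simp add: E_def K_def Hf_def h_def \<phi>_def U_def algebra_simps)
  have I_alt: "I t = N - S t - R t - E t" for t
    by (simp add: I_def S_def R_def E_def)
  have E_F: "E t = (F (U t) - \<psi> (U t)) / \<beta>" if "t \<ge> 0" for t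
  proof -
    have u: "U t \<in> {uinf<..u0}" "\<phi> (U t) = t" using Uprop[OF that] by auto
    have "(F (U t) - \<psi> (U t)) * exp (\<delta> * t) = \<beta> * (Et + K * Hf (U t))" using ident[OF u(1)] u(2) by simp
    then have "Et + K * Hf (U t) = (F (U t) - \<psi> (U t)) * exp (\<delta> * t) / \<beta>" using pos by (simp add: field_simps)
    then have "E t = exp (-\<delta> * t) * ((F (U t) - \<psi> (U t)) * exp (\<delta> * t) / \<beta>)" by (simp add: E_alt)
    also have "\<dots> = (F (U t) - \<psi> (U t)) / \<beta> * (exp (-\<delta> * t) * exp (\<delta> * t))" by (simp add: algebra_simps)
    also have "exp (-\<delta> * t) * exp (\<delta> * t) = 1" by (simp flip: exp_add)
    finally show ?thesis by simp
  qed
  have I_Ip: "I t = Ip t" if "t \<ge> 0" for t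
  proof -
    have up: "U t > 0" using Uprop[OF that] uinfpos by auto
    show ?thesis unfolding I_alt E_F[OF that] Ip_def S_fun R_fun F_K using pos
      by (simp add: field_simps)
  qed
  have E_Ip: "E t = N - S t - Ip t - R t" if "t \<ge> 0" for t
    using I_alt[of t] I_Ip[OF that] by simp
  have Uimg: "U ` {0..} \<subseteq> {uinf<..u0}" using Uprop by auto
  have Upos: "U t > 0" if "t \<ge> 0" for t using Uprop[OF that] uinfpos by auto
  have Scont: "continuous_on {0..} S" unfolding S_fun by (intro continuous_intros Ucont)
  have Rcont: "continuous_on {0..} R" unfolding R_fun using Upos
    by (intro continuous_intros Ucont) (auto simp: less_imp_neq[symmetric])
  have Ipcont: "continuous_on {0..} Ip" unfolding Ip_def
    by (intro continuous_intros continuous_on_compose2[OF psi_cont Ucont Uimg]) (use pos in auto)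
  have Icont: "continuous_on {0..} I" using Ipcont by (rule continuous_on_eq) (use I_Ip in auto)
  have Econt: "continuous_on {0..} E"
  proof -
    have "continuous_on {0..} (\<lambda>t. N - S t - Ip t - R t)" by (intro continuous_intros Scont Ipcont Rcont)
    then show ?thesis by (rule continuous_on_eq) (use E_Ip in auto)
  qed
  have ders: "(S has_real_derivative (-\<beta> * S t * I t)) (at t)
        \<and> (E has_real_derivative (\<beta> * S t * I t - \<delta> * E t)) (at t)
        \<and> (I has_real_derivative (\<delta> * E t - \<gamma> * I t)) (at t)
        \<and> (R has_real_derivative (\<gamma> * I t)) (at t)" if t: "t > 0" for t
  proof -
    have t0: "t \<ge> 0" using t by simp
    have Ut: "uinf < U t" "U t < u0" using Uprop[OF t0] Ult[OF t] by auto
    have pp: "\<psi> (U t) > 0" using psi_pos' Ut by simp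
    have up: "U t > 0" using Ut uinfpos by simp
    have It: "I t = \<psi> (U t) / \<beta>" using I_Ip[OF t0] by (simp add: Ip_def)
    have St: "S t = K * U t" by (simp add: S_fun)
    have Et: "E t = (F (U t) - \<psi> (U t)) / \<beta>" by (rule E_F[OF t0])
    have dS: "(S has_real_derivative (- (K * (U t * \<psi> (U t))))) (at t)"
      unfolding S_fun using Uder[OF t] by (auto intro!: derivative_eq_intros)
    have dR: "(R has_real_derivative ((\<gamma>/\<beta>) * \<psi> (U t))) (at t)"
      unfolding R_fun using Uder[OF t] up pos by (auto intro!: derivative_eq_intros simp: field_simps)
    have dIp: "(Ip has_real_derivative (dpsi (U t) * (- (U t * \<psi> (U t))) / \<beta>)) (at t)"
      unfolding Ip_def by (rule DERIV_cdivide[OF DERIV_chain2[OF psider[OF Ut] Uder[OF t]]])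
    have dI: "(I has_real_derivative (dpsi (U t) * (- (U t * \<psi> (U t))) / \<beta>)) (at t)"
      by (rule has_field_derivative_transform_within_open[OF dIp, of "{0<..}"]) (use t I_Ip in auto)
    have dE0: "((\<lambda>t. N - S t - Ip t - R t) has_real_derivative
        (0 - (- (K * (U t * \<psi> (U t)))) - dpsi (U t) * (- (U t * \<psi> (U t))) / \<beta> - (\<gamma>/\<beta>) * \<psi> (U t))) (at t)"
      by (intro derivative_intros dS dIp dR)
    have dE: "(E has_real_derivative
        (0 - (- (K * (U t * \<psi> (U t)))) - dpsi (U t) * (- (U t * \<psi> (U t))) / \<beta> - (\<gamma>/\<beta>) * \<psi> (U t))) (at t)"
      by (rule has_field_derivative_transform_within_open[OF dE0, of "{0<..}"]) (use t E_Ip in auto)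
    have e1: "- (K * (U t * \<psi> (U t))) = -\<beta> * S t * I t" unfolding It St using pos by simp
    have e2: "0 - (- (K * (U t * \<psi> (U t)))) - dpsi (U t) * (- (U t * \<psi> (U t))) / \<beta> - (\<gamma>/\<beta>) * \<psi> (U t)
        = \<beta> * S t * I t - \<delta> * E t"
      unfolding It St Et dpsi_def using pos up pp by (simp add: field_simps)
    have e3: "dpsi (U t) * (- (U t * \<psi> (U t))) / \<beta> = \<delta> * E t - \<gamma> * I t"
      unfolding It Et dpsi_def using pos up pp by (simp add: field_simps)
    have e4: "(\<gamma>/\<beta>) * \<psi> (U t) = \<gamma> * I t" unfolding It by simp
    show ?thesis using dS[unfolded e1] dE[unfolded e2] dI[unfolded e3] dR[unfolded e4] by blast
  qed
  have C1: "g C1_differentiable_on {0<..}"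
    if "\<And>t. t > 0 \<Longrightarrow> (g has_real_derivative D t) (at t)" "continuous_on {0..} D" for g D
    unfolding C1_differentiable_on_def
  proof (intro exI conjI ballI)
    fix x :: real assume "x \<in> {0<..}"
    then show "(g has_vector_derivative D x) (at x)"
      using that(1) by (simp add: has_real_derivative_iff_has_vector_derivative)
  next
    show "continuous_on {0<..} D" by (rule continuous_on_subset[OF that(2)]) auto
  qed
  have S0: "S 0 = St" using U0 Ku0 by (simp add: S_fun)
  have R0: "R 0 = Rt" using U0 lnu0 pos by (simp add: R_fun)
  have E0: "E 0 = Et" using U0 Hfu0 by (simp add: E_alt)
  have I0: "I 0 = It" using S0 R0 E0 by (simp add: I_alt N_def)
  have C1S: "S C1_differentiable_on {0<..}"
    by (rule C1[of S "\<lambda>t. -\<beta> * S t * I t"]) (use ders in blast, intro continuous_intros Scont Icont)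
  have C1E: "E C1_differentiable_on {0<..}"
    by (rule C1[of E "\<lambda>t. \<beta> * S t * I t - \<delta> * E t"]) (use ders in blast, intro continuous_intros Scont Icont Econt)
  have C1I: "I C1_differentiable_on {0<..}"
    by (rule C1[of I "\<lambda>t. \<delta> * E t - \<gamma> * I t"]) (use ders in blast, intro continuous_intros Icont Econt)
  have C1R: "R C1_differentiable_on {0<..}"
    by (rule C1[of R "\<lambda>t. \<gamma> * I t"]) (use ders in blast, intro continuous_intros Icont)
  show ?thesis using Scont Econt Icont Rcont C1S C1E C1I C1R ders S0 E0 I0 R0 by blast
qed

end
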